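(* Let $R$ be a discrete valuation ring with uniformizer $\pi$ and fraction field $F$. Let $n=n_1+\cdots+n_m$ and consider the subgroups $L=\mathrm{GL}_{n_1}\times\cdots\times\mathrm{GL}_{n_m}$ (block diagonal) $\subset P$ (block lower triangular with diagonal blocks $\mathrm{GL}_{n_1},\dots,\mathrm{GL}_{n_m}$) $\subset\mathrm{GL}_n$. Let $g\in P(F)$ and let $g_L\in L(F)$ be its block-diagonal part (its image in the Levi quotient). Put $N_l=n_1+\cdots+n_l$ for $0\le l\le m$. Let $k_1\ge\cdots\ge k_n$ be integers and assume that for every $0\le l\le m-1$ the matrix $(g_{ij})_{N_l+1\le i,j\le n}\in\mathrm{GL}_{n-N_l}(F)$ has type $(k_{N_l+1},\dots,k_n)$. Then $g_L^{-1}g\in P(R)$.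
   Context: For integers $k_1\ge\cdots\ge k_r$, an element $h\in\mathrm{GL}_r(F)$ has type $(k_1,\dots,k_r)$ if $h\in\mathrm{GL}_r(R)\,\mathrm{diag}(\pi^{k_1},\dots,\pi^{k_r})\,\mathrm{GL}_r(R)$. *)

theory Defs
  imports "Jordan_Normal_Form.Determinant"
begin

text \<open>A discrete (normalised, surjective) valuation on a field F; its valuation ring
  R = {x. x = 0 or v x >= 0} is a DVR with fraction field F, and every DVR arises so.
  The value v 0 is irrelevant (conventionally +infinity).\<close>
definition discrete_valuation :: "('a::field \<Rightarrow> int) \<Rightarrow> bool" where
  "discrete_valuation v \<longleftrightarrow>
     (\<forall>x y. x \<noteq> 0 \<longrightarrow> y \<noteq> 0 \<longrightarrow> v (x * y) = v x + v y) \<and>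
     (\<forall>x y. x \<noteq> 0 \<longrightarrow> y \<noteq> 0 \<longrightarrow> x + y \<noteq> 0 \<longrightarrow> min (v x) (v y) \<le> v (x + y)) \<and>
     (\<forall>k. \<exists>x. x \<noteq> 0 \<and> v x = k)"

definition val_ring :: "('a::field \<Rightarrow> int) \<Rightarrow> 'a set" where
  "val_ring v = {x. x = 0 \<or> 0 \<le> v x}"

definition uniformizer :: "('a::field \<Rightarrow> int) \<Rightarrow> 'a \<Rightarrow> bool" where
  "uniformizer v p \<longleftrightarrow> p \<noteq> 0 \<and> v p = 1"

definition GL_F :: "nat \<Rightarrow> 'a::field mat set" where
  "GL_F r = {A. A \<in> carrier_mat r r \<and> det A \<noteq> 0}"

definition GL_R :: "('a::field \<Rightarrow> int) \<Rightarrow> nat \<Rightarrow> 'a mat set" where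
  "GL_R v r = {A. A \<in> carrier_mat r r \<and>
      (\<forall>i<r. \<forall>j<r. A $$ (i, j) \<in> val_ring v) \<and> det A \<noteq> 0 \<and> v (det A) = 0}"

definition diag_pow :: "'a::field \<Rightarrow> int list \<Rightarrow> 'a mat" where
  "diag_pow p ks = mat (length ks) (length ks) (\<lambda>(i, j). if i = j then p powi (ks ! i) else 0)"

definition has_type :: "('a::field \<Rightarrow> int) \<Rightarrow> 'a \<Rightarrow> 'a mat \<Rightarrow> int list \<Rightarrow> bool" where
  "has_type v p h ks \<longleftrightarrow>
     (\<exists>U V. U \<in> GL_R v (length ks) \<and> V \<in> GL_R v (length ks) \<and> h = U * diag_pow p ks * V)"

text \<open>Block data for n = n_1 + ... + n_m given as the list ns = [n_1,...,n_m].
  N ns l = n_1 + ... + n_l; blk ns i is the (0-based) block containing index i (0-based).\<close>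
definition N :: "nat list \<Rightarrow> nat \<Rightarrow> nat" where
  "N ns l = sum_list (take l ns)"

definition blk :: "nat list \<Rightarrow> nat \<Rightarrow> nat" where
  "blk ns i = card {l. 1 \<le> l \<and> l \<le> length ns \<and> N ns l \<le> i}"

definition P_F :: "nat list \<Rightarrow> 'a::field mat set" where
  "P_F ns = {A. A \<in> GL_F (sum_list ns) \<and>
      (\<forall>i<sum_list ns. \<forall>j<sum_list ns. blk ns i < blk ns j \<longrightarrow> A $$ (i, j) = 0)}"

definition P_R :: "('a::field \<Rightarrow> int) \<Rightarrow> nat list \<Rightarrow> 'a mat set" where
  "P_R v ns = P_F ns \<inter> GL_R v (sum_list ns)"

definition levi_part :: "nat list \<Rightarrow> 'a::field mat \<Rightarrow> 'a mat" where
  "levi_part ns A = mat (sum_list ns) (sum_list ns)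
      (\<lambda>(i, j). if blk ns i = blk ns j then A $$ (i, j) else 0)"

definition lower_right :: "nat \<Rightarrow> 'a mat \<Rightarrow> 'a mat" where
  "lower_right a A = mat (dim_row A - a) (dim_col A - a) (\<lambda>(i, j). A $$ (i + a, j + a))"

end

theory Submission
  imports Defs
begin

definition vge :: "('a::field \<Rightarrow> int) \<Rightarrow> 'a \<Rightarrow> int \<Rightarrow> bool" where
  "vge v x e \<longleftrightarrow> x = 0 \<or> e \<le> v x"

context fixes v :: "'a::field \<Rightarrow> int" assumes dv: "discrete_valuation v"
begin

lemma vmult: "x \<noteq> 0 \<Longrightarrow> y \<noteq> 0 \<Longrightarrow> v (x * y) = v x + v y"
  using dv unfolding discrete_valuation_def by blast

lemma vadd: "x \<noteq> 0 \<Longrightarrow> y \<noteq> 0 \<Longrightarrow> x + y \<noteq> 0 \<Longrightarrow> min (v x) (v y) \<le> v (x + y)"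
  using dv unfolding discrete_valuation_def by blast

lemma v1: "v 1 = 0"
  using vmult[of 1 1] by simp

lemma vinv: "x \<noteq> 0 \<Longrightarrow> v (inverse x) = - v x"
  using vmult[of x "inverse x"] v1 by simp

lemma vdiv: "x \<noteq> 0 \<Longrightarrow> y \<noteq> 0 \<Longrightarrow> v (x / y) = v x - v y"
  by (simp add: divide_inverse vmult vinv)

lemma vneg1: "v (-1) = 0"
  using vmult[of "-1" "-1"] v1 by simp

lemma vneg: "x \<noteq> 0 \<Longrightarrow> v (- x) = v x"
  using vmult[of "-1" x] vneg1 by simp

lemma vpow: "x \<noteq> 0 \<Longrightarrow> v (x ^ n) = int n * v x"
  by (induction n) (auto simp: v1 vmult algebra_simps)

lemma vpowi: "x \<noteq> 0 \<Longrightarrow> v (x powi k) = k * v x"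
  by (auto simp: power_int_def vpow vinv)

lemma vprod: "finite S \<Longrightarrow> (\<forall>i\<in>S. f i \<noteq> 0) \<Longrightarrow> v (prod f S) = (\<Sum>i\<in>S. v (f i))"
  by (induction S rule: finite_induct) (auto simp: v1 vmult)

lemma vge_zero[simp]: "vge v 0 e" by (simp add: vge_def)

lemma vge_add: "vge v x e \<Longrightarrow> vge v y e \<Longrightarrow> vge v (x + y) e"
  unfolding vge_def using vadd[of x y] by fastforce

lemma vge_sum: "finite S \<Longrightarrow> (\<And>i. i \<in> S \<Longrightarrow> vge v (f i) e) \<Longrightarrow> vge v (sum f S) e"
  by (induction S rule: finite_induct) (auto intro: vge_add)

lemma vge_mult: "vge v x a \<Longrightarrow> vge v y b \<Longrightarrow> vge v (x * y) (a + b)"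
  unfolding vge_def by (cases "x = 0"; cases "y = 0") (auto simp: vmult)

lemma vge_prod: "finite S \<Longrightarrow> (\<And>i. i \<in> S \<Longrightarrow> vge v (f i) (e i)) \<Longrightarrow> vge v (prod f S) (sum e S)"
proof (induction S rule: finite_induct)
  case empty then show ?case by (simp add: vge_def v1)
next
  case (insert x F)
  have "vge v (f x * prod f F) (e x + sum e F)" by (rule vge_mult) (use insert in auto)
  then show ?case using insert by simp
qed

lemma vge_mono: "vge v x e \<Longrightarrow> e' \<le> e \<Longrightarrow> vge v x e'"
  unfolding vge_def by auto

lemma vge_neg: "vge v x e \<Longrightarrow> vge v (- x) e"
  unfolding vge_def by (cases "x = 0") (auto simp: vneg)

lemma vge_signof: "vge v x e \<Longrightarrow> vge v (signof p * x) e"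
  by (cases "evenperm p") (auto simp: sign_def vge_neg)

lemma vge_det: assumes A: "A \<in> carrier_mat n n" and e: "\<And>i j. i < n \<Longrightarrow> j < n \<Longrightarrow> vge v (A $$ (i,j)) 0"
  shows "vge v (det A) 0"
  unfolding det_def'[OF A]
proof (rule vge_sum)
  show "finite {p. p permutes {0..<n}}" by (simp add: finite_permutations)
  fix p assume p: "p \<in> {p. p permutes {0..<n}}"
  have "vge v (\<Prod>i = 0..<n. A $$ (i, p i)) (\<Sum>i = 0..<n. 0)"
    by (rule vge_prod, simp, rule e, simp, insert p, auto simp: permutes_in_image)
  then show "vge v (signof p * (\<Prod>i = 0..<n. A $$ (i, p i))) 0" by (simp add: vge_signof)
qed

end

lemma sum_smallest:
  fixes c :: "nat \<Rightarrow> int"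
  assumes "\<And>i j. i \<le> j \<Longrightarrow> j < n \<Longrightarrow> c j \<le> c i" "T \<subseteq> {0..<n}" "card T = r"
  shows "(\<Sum>j\<in>{n-r..<n}. c j) \<le> (\<Sum>j\<in>T. c j)"
  using assms
proof (induction n arbitrary: T r)
  case 0 then show ?case by simp
next
  case (Suc n)
  have fT: "finite T" using Suc.prems(2) finite_subset by blast
  have mono: "\<And>i j. i \<le> j \<Longrightarrow> j < n \<Longrightarrow> c j \<le> c i" using Suc.prems(1) by simp
  show ?case
  proof (cases "n \<in> T")
    case True
    have T': "T - {n} \<subseteq> {0..<n}" using Suc.prems(2) by auto
    have r: "r \<ge> 1" using True fT Suc.prems(3) by (metis One_nat_def card_0_eq empty_iff leI less_one)
    have cT': "card (T - {n}) = r - 1" using True fT Suc.prems(3) by simp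
    have IH: "(\<Sum>j\<in>{n-(r-1)..<n}. c j) \<le> (\<Sum>j\<in>T - {n}. c j)" by (rule Suc.IH[OF mono T' cT'])
    have r2: "r \<le> Suc n" using Suc.prems(2,3) by (metis card_atLeastLessThan card_mono finite_atLeastLessThan minus_nat.diff_0)
    have e1: "{Suc n - r..<Suc n} = insert n {n-(r-1)..<n}" using r r2 by auto
    have e2: "(\<Sum>j\<in>T. c j) = c n + (\<Sum>j\<in>T - {n}. c j)" using True fT by (simp add: sum.remove)
    show ?thesis unfolding e1 e2 using IH by simp
  next
    case False
    have T': "T \<subseteq> {0..<n}" using Suc.prems(2) False by (force simp: less_Suc_eq)
    have IH: "(\<Sum>j\<in>{n-r..<n}. c j) \<le> (\<Sum>j\<in>T. c j)" by (rule Suc.IH[OF mono T' Suc.prems(3)])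
    have r2: "r \<le> n" using T' Suc.prems(3) by (metis card_atLeastLessThan card_mono finite_atLeastLessThan minus_nat.diff_0)
    show ?thesis
    proof (cases "r = 0")
      case True then show ?thesis using Suc.prems(3) fT by simp
    next
      case False
      have e1: "{Suc n - r..<Suc n} = insert n {Suc n - r..<n}" using False r2 by auto
      have e2: "{n - r..<n} = insert (n - r) {Suc n - r..<n}" using False r2 by auto
      have "c n \<le> c (n - r)" using Suc.prems(1)[of "n - r" n] by simp
      moreover have "n - r \<notin> {Suc n - r..<n}" "n \<notin> {Suc n - r..<n}" using False r2 by auto
      ultimately show ?thesis using IH unfolding e1 e2 by simp
    qed
  qed
qed

context fixes v :: "'a::field \<Rightarrow> int" assumes dv: "discrete_valuation v"
begin

lemma vge_det_prod:
  assumes A: "A \<in> carrier_mat r n" and B: "B \<in> carrier_mat n r"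
  and eA: "\<And>i l. i < r \<Longrightarrow> l < n \<Longrightarrow> vge v (A $$ (i,l)) (c l)"
  and eB: "\<And>l u. l < n \<Longrightarrow> u < r \<Longrightarrow> vge v (B $$ (l,u)) 0"
  and mono: "\<And>i j. i \<le> j \<Longrightarrow> j < n \<Longrightarrow> c j \<le> c i"
  shows "vge v (det (A * B)) (\<Sum>j\<in>{n-r..<n}. c j)"
proof -
  let ?F = "{f. (\<forall>i\<in>{0..<r}. f i \<in> {0..<n}) \<and> (\<forall>i. i \<notin> {0..<r} \<longrightarrow> f i = i)}"
  have fU: "finite {0..<n}" by simp
  have "det (A * B) = (\<Sum>f\<in>?F. det (mat\<^sub>r r r (\<lambda>i. A $$ (i, f i) \<cdot>\<^sub>v row B (f i))))"
    unfolding mat_mul_finsum_alt[OF A B]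
    by (rule det_linear_rows_sum[OF fU], insert A B, auto)
  also have "vge v \<dots> (\<Sum>j\<in>{n-r..<n}. c j)"
  proof (rule vge_sum[OF dv])
    show "finite ?F" by (rule finite_bounded_functions, auto)
    fix f assume f: "f \<in> ?F"
    have rows: "(\<lambda>i. row B (f i)) \<in> {0..<r} \<rightarrow> carrier_vec r" using B by auto
    have eq: "det (mat\<^sub>r r r (\<lambda>i. A $$ (i, f i) \<cdot>\<^sub>v row B (f i))) =
      prod (\<lambda>i. A $$ (i, f i)) {0..<r} * det (mat\<^sub>r r r (\<lambda>i. row B (f i)))"
      by (rule det_rows_mul[OF rows])
    show "vge v (det (mat\<^sub>r r r (\<lambda>i. A $$ (i, f i) \<cdot>\<^sub>v row B (f i)))) (\<Sum>j\<in>{n-r..<n}. c j)"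
    proof (cases "inj_on f {0..<r}")
      case True
      have fimg: "f ` {0..<r} \<subseteq> {0..<n}" using f by auto
      have card: "card (f ` {0..<r}) = r" using True by (simp add: card_image)
      have s1: "(\<Sum>i\<in>{0..<r}. c (f i)) = (\<Sum>j\<in>f ` {0..<r}. c j)"
        using True by (simp add: sum.reindex)
      have s2: "(\<Sum>j\<in>{n-r..<n}. c j) \<le> (\<Sum>j\<in>f ` {0..<r}. c j)"
        by (rule sum_smallest[OF mono fimg card])
      have p1: "vge v (prod (\<lambda>i. A $$ (i, f i)) {0..<r}) (\<Sum>i\<in>{0..<r}. c (f i))"
        by (rule vge_prod[OF dv], simp, rule eA, insert f, auto)
      have p2: "vge v (det (mat\<^sub>r r r (\<lambda>i. row B (f i)))) 0"
        by (rule vge_det[OF dv], rule mat_row_carrierI, insert f B eB, auto)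
      have "vge v (prod (\<lambda>i. A $$ (i, f i)) {0..<r} * det (mat\<^sub>r r r (\<lambda>i. row B (f i))))
         ((\<Sum>i\<in>{0..<r}. c (f i)) + 0)"
        by (rule vge_mult[OF dv p1 p2])
      then show ?thesis unfolding eq using s1 s2 by (auto intro: vge_mono[OF dv])
    next
      case False
      then obtain i j where ij: "i < r" "j < r" "i \<noteq> j" "f i = f j" unfolding inj_on_def by auto
      have "det (mat\<^sub>r r r (\<lambda>i. row B (f i))) = 0"
        by (rule det_identical_rows[OF mat_row_carrierI ij(3) ij(1) ij(2)], insert ij B, auto)
      then show ?thesis unfolding eq by (simp add: vge_def)
    qed
  qed
  finally show ?thesis .
qed

end

lemma N_mono: "l \<le> l' \<Longrightarrow> N ns l \<le> N ns l'"
proof -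
  assume "l \<le> l'"
  then obtain d where d: "l' = l + d" using le_Suc_ex by blast
  show ?thesis unfolding N_def d take_add by simp
qed

lemma N_length: "N ns (length ns) = sum_list ns"
  unfolding N_def by simp

lemma N_0: "N ns 0 = 0" unfolding N_def by simp

lemma blk_le: "blk ns i \<le> length ns"
proof -
  have "blk ns i \<le> card {1..length ns}"
    unfolding blk_def by (rule card_mono, auto)
  then show ?thesis by simp
qed

lemma blk_char: assumes "a \<le> length ns" shows "N ns a \<le> i \<longleftrightarrow> a \<le> blk ns i"
proof
  let ?S = "{l. 1 \<le> l \<and> l \<le> length ns \<and> N ns l \<le> i}"
  have fS: "finite ?S" by (rule finite_subset[of _ "{1..length ns}"], auto)
  {
    assume "N ns a \<le> i"
    then have "{1..a} \<subseteq> ?S" using assms N_mono[of _ a ns] by fastforce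
    from card_mono[OF fS this] show "a \<le> blk ns i" unfolding blk_def by simp
  }
  {
    assume a: "a \<le> blk ns i"
    show "N ns a \<le> i"
    proof (rule ccontr)
      assume c: "\<not> N ns a \<le> i"
      then have "a \<noteq> 0" using N_0 by (metis le0)
      have "?S \<subseteq> {1..<a}"
      proof
        fix l assume l: "l \<in> ?S"
        have "l < a"
        proof (rule ccontr)
          assume "\<not> l < a" then have "N ns a \<le> N ns l" using N_mono by simp
          then show False using l c by simp
        qed
        then show "l \<in> {1..<a}" using l by simp
      qed
      from card_mono[OF _ this] have "blk ns i \<le> a - 1" unfolding blk_def by simp
      then show False using a \<open>a \<noteq> 0\<close> by simp
    qed
  }
qed

lemma blk_lt: "i < sum_list ns \<Longrightarrow> blk ns i < length ns"
  using blk_char[of "length ns" ns i] N_length[of ns] blk_le[of ns i] by simp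

lemma det_levi:
  assumes A: "A \<in> carrier_mat (sum_list ns) (sum_list ns)"
  and tri: "\<forall>i<sum_list ns. \<forall>j<sum_list ns. blk ns i < blk ns j \<longrightarrow> A $$ (i, j) = 0"
  shows "det (levi_part ns A) = det A"
proof -
  let ?n = "sum_list ns"
  have L: "levi_part ns A \<in> carrier_mat ?n ?n" unfolding levi_part_def by simp
  show ?thesis unfolding det_def'[OF A] det_def'[OF L]
  proof (rule sum.cong[OF refl])
    fix p assume p: "p \<in> {p. p permutes {0..<?n}}"
    then have pp: "p permutes {0..<?n}" by simp
    have pin: "\<And>i. i < ?n \<Longrightarrow> p i < ?n" using permutes_in_image[OF pp] by simp
    show "signof p * (\<Prod>i = 0..<?n. levi_part ns A $$ (i, p i)) = signof p * (\<Prod>i = 0..<?n. A $$ (i, p i))"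
    proof (cases "\<forall>i<?n. blk ns (p i) = blk ns i")
      case True
      have "(\<Prod>i = 0..<?n. levi_part ns A $$ (i, p i)) = (\<Prod>i = 0..<?n. A $$ (i, p i))"
        by (rule prod.cong[OF refl], insert True pin, auto simp: levi_part_def)
      then show ?thesis by simp
    next
      case False
      then obtain i0 where i0: "i0 < ?n" "blk ns (p i0) \<noteq> blk ns i0" by auto
      have z1: "(\<Prod>i = 0..<?n. levi_part ns A $$ (i, p i)) = 0"
        by (rule prod_zero, simp, rule bexI[of _ i0], insert i0 pin, auto simp: levi_part_def)
      have "\<exists>i<?n. blk ns i < blk ns (p i)"
      proof (rule ccontr)
        assume "\<not> ?thesis"
        then have le: "\<And>i. i \<in> {0..<?n} \<Longrightarrow> blk ns (p i) \<le> blk ns i" by (meson atLeastLessThan_iff not_less)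
        have "(\<Sum>i\<in>{0..<?n}. blk ns (p i)) < (\<Sum>i\<in>{0..<?n}. blk ns i)"
          by (rule sum_strict_mono_ex1, simp, use le in blast, rule bexI[of _ i0], insert le[of i0] i0, auto)
        moreover have "(\<Sum>i\<in>{0..<?n}. blk ns (p i)) = (\<Sum>i\<in>{0..<?n}. blk ns i)"
          using sum.permute[OF pp, of "blk ns"] by (simp add: o_def)
        ultimately show False by simp
      qed
      then obtain i1 where i1: "i1 < ?n" "blk ns i1 < blk ns (p i1)" by auto
      have z2: "(\<Prod>i = 0..<?n. A $$ (i, p i)) = 0"
        by (rule prod_zero, simp, rule bexI[of _ i1], insert i1 pin tri, auto)
      show ?thesis by (simp only: z1 z2)
    qed
  qed
qed

lemma diag_pow_carrier: "diag_pow p ks \<in> carrier_mat (length ks) (length ks)"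
  unfolding diag_pow_def by simp

lemma det_diag_pow: "det (diag_pow p ks) = (\<Prod>i = 0..<length ks. p powi (ks ! i))"
proof -
  have ut: "upper_triangular (diag_pow p ks)" unfolding upper_triangular_def diag_pow_def by auto
  show ?thesis unfolding det_upper_triangular[OF ut diag_pow_carrier] prod_list_diag_prod
    by (rule prod.cong, auto simp: diag_pow_def)
qed

lemma type_det:
  assumes dv: "discrete_valuation v" and up: "uniformizer v p"
  and U: "U \<in> GL_R v (length ks)" and V: "V \<in> GL_R v (length ks)"
  shows "det (U * diag_pow p ks * V) \<noteq> 0 \<and> v (det (U * diag_pow p ks * V)) = sum_list ks"
proof -
  let ?r = "length ks"
  have Uc: "U \<in> carrier_mat ?r ?r" and Vc: "V \<in> carrier_mat ?r ?r"
    and dU: "det U \<noteq> 0" "v (det U) = 0" and dV: "det V \<noteq> 0" "v (det V) = 0"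
    using U V unfolding GL_R_def by auto
  have p0: "p \<noteq> 0" and vp: "v p = 1" using up unfolding uniformizer_def by auto
  have pz: "\<And>k. p powi k \<noteq> 0" using p0 by simp
  have dd: "det (diag_pow p ks) \<noteq> 0" unfolding det_diag_pow using pz by simp
  have vd: "v (det (diag_pow p ks)) = sum_list ks"
  proof -
    have "v (\<Prod>i = 0..<length ks. p powi (ks ! i)) = (\<Sum>i = 0..<length ks. v (p powi (ks ! i)))"
      by (rule vprod[OF dv]) (simp_all add: pz p0)
    then show ?thesis unfolding det_diag_pow by (simp add: vpowi[OF dv p0] vp sum_list_sum_nth)
  qed
  have e: "det (U * diag_pow p ks * V) = det U * det (diag_pow p ks) * det V"
    using det_mult[OF Uc diag_pow_carrier] det_mult[OF mult_carrier_mat[OF Uc diag_pow_carrier] Vc]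
    by simp
  show ?thesis unfolding e using dU dV dd vd by (simp add: vmult[OF dv])
qed

lemma diag_entry:
  assumes U: "U \<in> carrier_mat n n" and V: "V \<in> carrier_mat n n" and len: "length ks = n"
  and x: "x < n" and y: "y < n"
  shows "(U * diag_pow p ks * V) $$ (x,y) = (\<Sum>l = 0..<n. (U $$ (x,l) * p powi (ks ! l)) * V $$ (l,y))"
proof -
  have D: "diag_pow p ks \<in> carrier_mat n n" using diag_pow_carrier len by metis
  have UD: "\<And>l. l < n \<Longrightarrow> (U * diag_pow p ks) $$ (x,l) = U $$ (x,l) * p powi (ks ! l)"
  proof -
    fix l assume l: "l < n"
    have "(U * diag_pow p ks) $$ (x,l) = (\<Sum>k = 0..<n. U $$ (x,k) * diag_pow p ks $$ (k,l))"
      using U D x l by (simp add: scalar_prod_def)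
    also have "\<dots> = (\<Sum>k = 0..<n. if k = l then U $$ (x,l) * p powi (ks ! l) else 0)"
      by (rule sum.cong, insert l len, auto simp: diag_pow_def)
    also have "\<dots> = U $$ (x,l) * p powi (ks ! l)" using l by simp
    finally show "(U * diag_pow p ks) $$ (x,l) = U $$ (x,l) * p powi (ks ! l)" .
  qed
  have "(U * diag_pow p ks * V) $$ (x,y) = (\<Sum>l = 0..<n. (U * diag_pow p ks) $$ (x,l) * V $$ (l,y))"
    using U D V x y by (simp add: scalar_prod_def del: assoc_mult_mat)
  also have "\<dots> = (\<Sum>l = 0..<n. (U $$ (x,l) * p powi (ks ! l)) * V $$ (l,y))"
    by (rule sum.cong, auto simp: UD)
  finally show ?thesis .
qed

lemma sum_list_drop: "s \<le> length xs \<Longrightarrow> sum_list (drop s xs) = (\<Sum>l\<in>{s..<length xs}. xs ! l)"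
proof -
  assume s: "s \<le> length xs"
  have "sum_list (drop s xs) = (\<Sum>i = 0..<length xs - s. xs ! (i + s))"
    by (simp add: sum_list_sum_nth add.commute)
  also have "\<dots> = (\<Sum>l\<in>{0 + s..<(length xs - s) + s}. xs ! l)"
    by (rule sum.shift_bounds_nat_ivl[symmetric])
  also have "{0 + s..<(length xs - s) + s} = {s..<length xs}" using s by simp
  finally show ?thesis .
qed

lemma cancel_left:
  assumes A: "A \<in> carrier_mat n n" and d: "det A \<noteq> (0::'a::field)"
  and B: "B \<in> carrier_mat n k" and C: "C \<in> carrier_mat n k" and e: "A * B = A * C"
  shows "B = C"
proof -
  have "\<And>M :: 'a mat. M \<in> carrier_mat n k \<Longrightarrow> adj_mat A * (A * M) = det A \<cdot>\<^sub>m M"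
  proof -
    fix M :: "'a mat" assume M: "M \<in> carrier_mat n k"
    have "adj_mat A * (A * M) = (adj_mat A * A) * M"
      using adj_mat(1)[OF A] A M by simp
    also have "\<dots> = det A \<cdot>\<^sub>m M" unfolding adj_mat(3)[OF A]
      using M by (simp add: mult_smult_assoc_mat[OF one_carrier_mat M])
    finally show "adj_mat A * (A * M) = det A \<cdot>\<^sub>m M" .
  qed
  from this[OF B] this[OF C] e have eq: "det A \<cdot>\<^sub>m B = det A \<cdot>\<^sub>m C" by simp
  show ?thesis
  proof (rule eq_matI)
    fix i j assume ij: "i < dim_row C" "j < dim_col C"
    have "(det A \<cdot>\<^sub>m B) $$ (i,j) = (det A \<cdot>\<^sub>m C) $$ (i,j)" using eq by simp
    then have "det A * B $$ (i,j) = det A * C $$ (i,j)" using ij B C by simp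
    then show "B $$ (i,j) = C $$ (i,j)" using d by simp
  qed (use B C in auto)
qed

lemma block_lemma:
  assumes dv: "discrete_valuation v" and up: "uniformizer v p"
  and g: "g \<in> carrier_mat n n" and len: "length ks = n"
  and sorted: "sorted_wrt (\<ge>) ks"
  and t0: "has_type v p g ks"
  and ts: "has_type v p (lower_right s g) (drop s ks)"
  and s: "s \<le> n"
  and D_def: "D = lower_right s g" and Q_def: "Q = mat (n-s) n (\<lambda>(t,j). g $$ (t+s, j))"
  and X_def: "X = (1 / det D) \<cdot>\<^sub>m (adj_mat D * Q)"
  shows "X \<in> carrier_mat (n-s) n" "D * X = Q" "\<forall>t<n-s. \<forall>j<n. vge v (X $$ (t,j)) 0"
    "\<forall>t<n-s. \<forall>j<n. s \<le> j \<longrightarrow> t \<noteq> j - s \<longrightarrow> X $$ (t,j) = 0"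
proof -
  let ?r = "n - s"
  have Dc: "D \<in> carrier_mat ?r ?r" using g unfolding D_def lower_right_def by simp
  have Qc: "Q \<in> carrier_mat ?r n" unfolding Q_def by simp
  show Xc: "X \<in> carrier_mat ?r n" unfolding X_def using adj_mat(1)[OF Dc] Qc by simp
  from ts obtain U V where U: "U \<in> GL_R v ?r" and V: "V \<in> GL_R v ?r"
    and Deq: "D = U * diag_pow p (drop s ks) * V"
    unfolding has_type_def D_def using len by auto
  have dD: "det D \<noteq> 0" and vD: "v (det D) = sum_list (drop s ks)"
    using type_det[OF dv up, of U "drop s ks" V] U V len unfolding Deq by auto
  have vD': "v (det D) = (\<Sum>l\<in>{s..<n}. ks ! l)" unfolding vD using sum_list_drop[of s ks] s len by simp
  from t0 obtain U0 V0 where U0: "U0 \<in> GL_R v n" and V0: "V0 \<in> GL_R v n"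
    and geq: "g = U0 * diag_pow p ks * V0"
    unfolding has_type_def using len by auto
  have U0c: "U0 \<in> carrier_mat n n" and V0c: "V0 \<in> carrier_mat n n" using U0 V0 unfolding GL_R_def by auto
  have U0i: "\<And>i j. i < n \<Longrightarrow> j < n \<Longrightarrow> vge v (U0 $$ (i,j)) 0"
    and V0i: "\<And>i j. i < n \<Longrightarrow> j < n \<Longrightarrow> vge v (V0 $$ (i,j)) 0"
    using U0 V0 unfolding GL_R_def val_ring_def vge_def by auto
  have gent: "\<And>x y. x < n \<Longrightarrow> y < n \<Longrightarrow> g $$ (x,y) = (\<Sum>l = 0..<n. (U0 $$ (x,l) * p powi (ks ! l)) * V0 $$ (l,y))"
    unfolding geq by (rule diag_entry[OF U0c V0c len])
  have p0: "p \<noteq> 0" and vp: "v p = 1" using up unfolding uniformizer_def by auto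
  have DX: "D * X = Q"
  proof -
    have "D * X = (1 / det D) \<cdot>\<^sub>m (D * (adj_mat D * Q))"
      unfolding X_def by (rule mult_smult_distrib[OF Dc], insert adj_mat(1)[OF Dc] Qc, auto)
    also have "D * (adj_mat D * Q) = (D * adj_mat D) * Q"
      using Dc adj_mat(1)[OF Dc] Qc by simp
    also have "\<dots> = det D \<cdot>\<^sub>m Q" unfolding adj_mat(2)[OF Dc]
      using Qc by (simp add: mult_smult_assoc_mat[OF one_carrier_mat Qc])
    finally have e: "D * X = (1 / det D) \<cdot>\<^sub>m (det D \<cdot>\<^sub>m Q)" .
    show ?thesis unfolding e
    proof (rule eq_matI)
      fix i j assume "i < dim_row Q" "j < dim_col Q"
      then show "((1 / det D) \<cdot>\<^sub>m (det D \<cdot>\<^sub>m Q)) $$ (i, j) = Q $$ (i, j)" using dD by simp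
    qed simp_all
  qed
  then show "D * X = Q" .
  have cr: "\<And>t j. t < ?r \<Longrightarrow> j < n \<Longrightarrow> X $$ (t,j) * det D = det (replace_col D (col Q j) t)"
  proof -
    fix t j assume t: "t < ?r" and j: "j < n"
    have "col (D * X) j = D *\<^sub>v col X j" by (rule col_mult2[OF Dc Xc j])
    then have cQ: "col Q j = D *\<^sub>v col X j" unfolding DX .
    have cX: "col X j \<in> carrier_vec ?r" by (rule col_carrier_vec[OF j Xc])
    have "det (replace_col D (D *\<^sub>v col X j) t) = col X j $ t * det D"
      by (rule cramer_lemma_mat[OF Dc cX t])
    then have "det (replace_col D (col Q j) t) = col X j $ t * det D" unfolding cQ .
    moreover have "col X j $ t = X $$ (t,j)" by (rule index_col, insert Xc t j, auto)
    ultimately show "X $$ (t,j) * det D = det (replace_col D (col Q j) t)" by simp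
  qed
  show "\<forall>t<?r. \<forall>j<n. s \<le> j \<longrightarrow> t \<noteq> j - s \<longrightarrow> X $$ (t,j) = 0"
  proof (intro allI impI)
    fix t j assume t: "t < ?r" and j: "j < n" and sj: "s \<le> j" and tj: "t \<noteq> j - s"
    have "det (replace_col D (col Q j) t) = 0"
    proof (rule det_identical_columns[of _ ?r t "j - s"])
      show "replace_col D (col Q j) t \<in> carrier_mat ?r ?r" using Dc unfolding replace_col_def by simp
      show "col (replace_col D (col Q j) t) t = col (replace_col D (col Q j) t) (j - s)"
      proof (rule eq_vecI)
        fix x assume "x < dim_vec (col (replace_col D (col Q j) t) (j - s))"
        then have x: "x < ?r" using Dc by (simp add: replace_col_def)
        have jr: "j - s < ?r" using j sj by simp
        have "col (replace_col D (col Q j) t) t $ x = Q $$ (x, j)"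
          using x t Dc Qc j by (simp add: replace_col_def)
        also have "\<dots> = g $$ (x + s, j)" using x j by (simp add: Q_def)
        also have "\<dots> = D $$ (x, j - s)" using x jr g sj by (simp add: D_def lower_right_def)
        also have "\<dots> = col (replace_col D (col Q j) t) (j - s) $ x"
          using x jr tj Dc by (simp add: replace_col_def)
        finally show "col (replace_col D (col Q j) t) t $ x = col (replace_col D (col Q j) t) (j - s) $ x" .
      qed (use Dc in \<open>simp add: replace_col_def\<close>)
    qed (use t j sj tj in auto)
    then show "X $$ (t,j) = 0" using cr[OF t j] dD by simp
  qed
  show "\<forall>t<?r. \<forall>j<n. vge v (X $$ (t,j)) 0"
  proof (intro allI impI)
    fix t j assume t: "t < ?r" and j: "j < n"
    define sg where "sg = (\<lambda>u. if u = t then j else u + s)"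
    define A where "A = mat ?r n (\<lambda>(x,l). U0 $$ (x+s,l) * p powi (ks ! l))"
    define B where "B = mat n ?r (\<lambda>(l,u). V0 $$ (l, sg u))"
    have sgn: "\<And>u. u < ?r \<Longrightarrow> sg u < n" unfolding sg_def using j by auto
    have RAB: "replace_col D (col Q j) t = A * B"
    proof (rule eq_matI)
      fix x u assume x: "x < dim_row (A * B)" and u: "u < dim_col (A * B)"
      then have x': "x < ?r" and u': "u < ?r" unfolding A_def B_def by auto
      have "replace_col D (col Q j) t $$ (x,u) = (if u = t then Q $$ (x, j) else D $$ (x,u))"
        using x' u' Dc Qc j by (simp add: replace_col_def)
      also have "\<dots> = g $$ (x + s, sg u)"
        using x' u' j g by (simp add: sg_def Q_def D_def lower_right_def)
      also have "\<dots> = (\<Sum>l = 0..<n. (U0 $$ (x+s,l) * p powi (ks ! l)) * V0 $$ (l,sg u))"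
        by (rule gent, insert x' sgn[OF u'], auto)
      also have "\<dots> = (A * B) $$ (x,u)"
        using x' u' unfolding A_def B_def by (auto simp: scalar_prod_def intro!: sum.cong)
      finally show "replace_col D (col Q j) t $$ (x,u) = (A * B) $$ (x,u)" .
    qed (insert Dc, auto simp: A_def B_def replace_col_def)
    have cb: "vge v (det (A * B)) (\<Sum>l\<in>{n-?r..<n}. ks ! l)"
    proof (rule vge_det_prod[OF dv])
      show "A \<in> carrier_mat ?r n" unfolding A_def by simp
      show "B \<in> carrier_mat n ?r" unfolding B_def by simp
      show "\<And>i l. i < ?r \<Longrightarrow> l < n \<Longrightarrow> vge v (A $$ (i, l)) (ks ! l)"
      proof -
        fix i l assume i: "i < ?r" and l: "l < n"
        have "vge v (U0 $$ (i+s,l) * p powi (ks ! l)) (0 + ks ! l)"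
          by (rule vge_mult[OF dv], rule U0i, insert i l, auto simp: vge_def vpowi[OF dv p0] vp)
        then show "vge v (A $$ (i, l)) (ks ! l)" using i l unfolding A_def by simp
      qed
      show "\<And>l u. l < n \<Longrightarrow> u < ?r \<Longrightarrow> vge v (B $$ (l, u)) 0"
        unfolding B_def using V0i sgn by auto
      show "\<And>i j. i \<le> j \<Longrightarrow> j < n \<Longrightarrow> ks ! j \<le> ks ! i"
      proof -
        fix i j :: nat assume "i \<le> j" "j < n"
        then show "ks ! j \<le> ks ! i" using sorted_wrt_nth_less[OF sorted, of i j] len
          by (cases "i = j") auto
      qed
    qed
    have nr: "n - ?r = s" using s by simp
    have num: "vge v (det (replace_col D (col Q j) t)) (v (det D))"
      using cb unfolding RAB nr vD' .
    have Xe: "X $$ (t,j) = det (replace_col D (col Q j) t) / det D"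
      using cr[OF t j] dD by (simp add: field_simps)
    show "vge v (X $$ (t,j)) 0"
    proof (cases "det (replace_col D (col Q j) t) = 0")
      case True then show ?thesis unfolding Xe by (simp add: vge_def)
    next
      case False
      then show ?thesis unfolding Xe using num dD by (simp add: vge_def vdiv[OF dv])
    qed
  qed
qed

theorem lemma4p20:
  fixes v :: "'a::field \<Rightarrow> int" and p :: 'a and ns :: "nat list"
    and g h :: "'a mat" and ks :: "int list"
  assumes "discrete_valuation v"
    and "uniformizer v p"
    and "g \<in> P_F ns"
    and "length ks = sum_list ns"
    and "sorted_wrt (\<ge>) ks"
    and "\<forall>l < length ns. has_type v p (lower_right (N ns l) g) (drop (N ns l) ks)"
    and "h \<in> carrier_mat (sum_list ns) (sum_list ns)"
    and "levi_part ns g * h = g"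
  shows "h \<in> P_R v ns"
proof -
  let ?n = "sum_list ns"
  let ?m = "length ns"
  have gc: "g \<in> carrier_mat ?n ?n" and dg: "det g \<noteq> 0"
    and tri: "\<forall>i<?n. \<forall>j<?n. blk ns i < blk ns j \<longrightarrow> g $$ (i,j) = 0"
    using assms(3) unfolding P_F_def GL_F_def by auto
  define G where "G = levi_part ns g"
  have Gc: "G \<in> carrier_mat ?n ?n" unfolding G_def levi_part_def by simp
  have dG: "det G = det g" unfolding G_def by (rule det_levi[OF gc tri])
  define Dm where "Dm a = lower_right (N ns a) g" for a
  define Qm where "Qm a = mat (?n - N ns a) ?n (\<lambda>(t,j). g $$ (t + N ns a, j))" for a
  define Xm where "Xm a = (1 / det (Dm a)) \<cdot>\<^sub>m (adj_mat (Dm a) * Qm a)" for a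
  have Dmc: "\<And>a. Dm a \<in> carrier_mat (?n - N ns a) (?n - N ns a)"
    using gc unfolding Dm_def lower_right_def by simp
  have BL: "Xm a \<in> carrier_mat (?n - N ns a) ?n \<and> Dm a * Xm a = Qm a \<and>
     (\<forall>t<?n - N ns a. \<forall>j<?n. vge v (Xm a $$ (t,j)) 0) \<and>
     (\<forall>t<?n - N ns a. \<forall>j<?n. N ns a \<le> j \<longrightarrow> t \<noteq> j - N ns a \<longrightarrow> Xm a $$ (t,j) = 0)"
    if a: "a < ?m" for a
  proof -
    have l0: "lower_right (N ns 0) g = g"
      by (rule eq_matI, insert gc, auto simp: lower_right_def N_0)
    have t0: "has_type v p g ks" using assms(6) a l0 by (metis drop0 N_0 gr_implies_not0 neq0_conv)
    have ts: "has_type v p (lower_right (N ns a) g) (drop (N ns a) ks)" using assms(6) a by simp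
    have s: "N ns a \<le> ?n" using N_mono[of a ?m ns] N_length[of ns] a by simp
    show ?thesis
      using block_lemma[OF assms(1,2) gc assms(4,5) t0 ts s Dm_def Qm_def Xm_def] by blast
  qed
  define h' where "h' = mat ?n ?n (\<lambda>(i,j). Xm (blk ns i) $$ (i - N ns (blk ns i), j))"
  have h'c: "h' \<in> carrier_mat ?n ?n" unfolding h'_def by simp
  have Gh': "G * h' = g"
  proof (rule eq_matI)
    fix i j assume "i < dim_row g" "j < dim_col g"
    then have i: "i < ?n" and j: "j < ?n" using gc by auto
    define a where "a = blk ns i"
    define s where "s = N ns a"
    have a: "a < ?m" unfolding a_def by (rule blk_lt[OF i])
    have ch: "\<And>k. s \<le> k \<longleftrightarrow> a \<le> blk ns k" unfolding s_def using blk_char[of a ns] a by simp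
    have si: "s \<le> i" using ch a_def by simp
    have XD: "Dm a * Xm a = Qm a" and Xc: "Xm a \<in> carrier_mat (?n - s) ?n" using BL[OF a] s_def by auto
    have "(G * h') $$ (i,j) = (\<Sum>k\<in>{0..<?n}. G $$ (i,k) * h' $$ (k,j))"
      using Gc h'c i j by (simp add: scalar_prod_def)
    also have "\<dots> = (\<Sum>k\<in>{0..<?n}. if blk ns k = a then g $$ (i,k) * Xm a $$ (k - s, j) else 0)"
      by (rule sum.cong, insert i j, auto simp: G_def levi_part_def h'_def a_def s_def)
    also have "\<dots> = (\<Sum>k\<in>{s..<?n}. if blk ns k = a then g $$ (i,k) * Xm a $$ (k - s, j) else 0)"
      by (rule sum.mono_neutral_right, simp, auto simp: ch)
    also have "\<dots> = (\<Sum>k\<in>{s..<?n}. g $$ (i,k) * Xm a $$ (k - s, j))"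
    proof (rule sum.cong[OF refl])
      fix k assume k: "k \<in> {s..<?n}"
      show "(if blk ns k = a then g $$ (i,k) * Xm a $$ (k - s, j) else 0) = g $$ (i,k) * Xm a $$ (k - s, j)"
      proof (cases "blk ns k = a")
        case False
        then have "a < blk ns k" using ch k by force
        then have "g $$ (i,k) = 0" using tri i k unfolding a_def by auto
        then show ?thesis by simp
      qed simp
    qed
    also have "\<dots> = (\<Sum>t\<in>{0..<?n - s}. g $$ (i, t + s) * Xm a $$ (t, j))"
    proof -
      have "{s..<?n} = {0 + s..<(?n - s) + s}" using si i by simp
      then show ?thesis by (simp only: sum.shift_bounds_nat_ivl) simp
    qed
    also have "\<dots> = (Dm a * Xm a) $$ (i - s, j)"
    proof -
      have dd: "dim_row g = ?n" "dim_col g = ?n" using gc by auto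
      have "(Dm a * Xm a) $$ (i - s, j) = (\<Sum>t\<in>{0..<?n - s}. Dm a $$ (i - s, t) * Xm a $$ (t, j))"
        using Dmc[of a] Xc i j si unfolding s_def by (simp add: scalar_prod_def)
      also have "\<dots> = (\<Sum>t\<in>{0..<?n - s}. g $$ (i, t + s) * Xm a $$ (t, j))"
        by (rule sum.cong, insert i si, auto simp: Dm_def lower_right_def dd s_def)
      finally show ?thesis by simp
    qed
    also have "\<dots> = g $$ (i,j)" unfolding XD using i j si by (simp add: Qm_def s_def)
    finally show "(G * h') $$ (i,j) = g $$ (i,j)" .
  qed (use Gc h'c gc in auto)
  have hh: "h = h'"
    by (rule cancel_left[OF Gc _ assms(7) h'c], use dG dg in simp, use Gh' assms(8) G_def in simp)
  have dh: "det h = 1"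
  proof -
    have "det G * det h = det g" using det_mult[OF Gc assms(7)] assms(8) G_def by simp
    then show ?thesis using dG dg by simp
  qed
  have htri: "\<forall>i<?n. \<forall>j<?n. blk ns i < blk ns j \<longrightarrow> h $$ (i,j) = 0"
  proof (intro allI impI)
    fix i j assume i: "i < ?n" and j: "j < ?n" and ij: "blk ns i < blk ns j"
    define a where "a = blk ns i"
    define s where "s = N ns a"
    have a: "a < ?m" unfolding a_def by (rule blk_lt[OF i])
    have ch: "\<And>k. s \<le> k \<longleftrightarrow> a \<le> blk ns k" unfolding s_def using blk_char[of a ns] a by simp
    have si: "s \<le> i" using ch a_def by simp
    have sj: "s \<le> j" using ch ij a_def by simp
    have "i \<noteq> j" using ij by auto
    then have "Xm a $$ (i - s, j) = 0" using BL[OF a] si sj i j unfolding s_def by auto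
    then show "h $$ (i,j) = 0" unfolding hh h'_def using i j a_def s_def by simp
  qed
  have hint: "\<forall>i<?n. \<forall>j<?n. h $$ (i,j) \<in> val_ring v"
  proof (intro allI impI)
    fix i j assume i: "i < ?n" and j: "j < ?n"
    define a where "a = blk ns i"
    define s where "s = N ns a"
    have a: "a < ?m" unfolding a_def by (rule blk_lt[OF i])
    have si: "s \<le> i" using blk_char[of a ns i] a unfolding s_def a_def by simp
    have "vge v (Xm a $$ (i - s, j)) 0" using BL[OF a] si i j unfolding s_def by auto
    then show "h $$ (i,j) \<in> val_ring v" unfolding hh h'_def using i j a_def s_def
      by (simp add: vge_def val_ring_def)
  qed
  show ?thesis unfolding P_R_def P_F_def GL_F_def GL_R_def
    using assms(7) dh htri hint v1[OF assms(1)] by auto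
qed


end
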